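(* Let $X$ be a real $n\times p$ matrix ($p<n$) of full rank with rows $x_1^\top,\dots,x_n^\top$, let $y\in\mathbb{R}^n$, $\sigma>0$, and $$\psi(g,b)=\sigma\|y-Xg-b\|_1+\tfrac12\|b\|_2^2,\qquad (g,b)\in\mathbb{R}^p\times\mathbb{R}^n.$$ Then: (i) $(\hat g,\hat b)$ minimizes $\psi$ if and only if $X^\top\hat b=0$ and, for every $i\in\{1,\dots,n\}$, $$\hat b_i=\begin{cases}\sigma,&\text{if } y_i-x_i^\top\hat g>\sigma,\\ y_i-x_i^\top\hat g,&\text{if } y_i-x_i^\top\hat g\in[-\sigma,\sigma],\\ -\sigma,&\text{if } y_i-x_i^\top\hat g<-\sigma;\end{cases}$$ in particular $\|\hat b\|_\infty\leq\sigma$ for any minimizer. (ii) The Lagrangian dual of the problem $\min\psi$ is $\gamma:=\max_{u\in\sigma P^*}\big(u^\top y-\tfrac12\|u\|_2^2\big)$, where $P^*=\{u\in\ker X^\top : \|u\|_\infty\leq 1\}$, and $\min_{(g,b)\in\mathbb{R}^p\times\mathbb{R}^n}\psi(g,b)=\gamma$. *)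

theory Defs
  imports "HOL-Analysis.Analysis"
begin

text \<open>Vectors in R^n are modelled as real^'n for a finite index type 'n;
  an n x p matrix is real^'p^'n (rows indexed by 'n).\<close>

definition l1_norm :: "real^'n \<Rightarrow> real" where
  "l1_norm v = (\<Sum>i\<in>UNIV. \<bar>v $ i\<bar>)"

definition linf_norm :: "real^'n \<Rightarrow> real" where
  "linf_norm v = Max (range (\<lambda>i. \<bar>v $ i\<bar>))"

definition psi :: "real \<Rightarrow> real^'p^'n \<Rightarrow> real^'n \<Rightarrow> real^'p \<Rightarrow> real^'n \<Rightarrow> real" where
  "psi \<sigma> X y g b = \<sigma> * l1_norm (y - X *v g - b) + 1/2 * (norm b)^2"

definition Pstar :: "real^'p^'n \<Rightarrow> (real^'n) set" where
  "Pstar X = {u. transpose X *v u = 0 \<and> linf_norm u \<le> 1}"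

definition dual_obj :: "real^'n \<Rightarrow> real^'n \<Rightarrow> real" where
  "dual_obj y u = u \<bullet> y - 1/2 * (norm u)^2"

text \<open>Lagrangian of the equivalent constrained problem
  min sigma ||r||_1 + 1/2 ||b||_2^2  s.t.  r = y - X g - b,
  with multiplier u for the equality constraint.\<close>
definition lagrangian :: "real \<Rightarrow> real^'p^'n \<Rightarrow> real^'n \<Rightarrow> real^'p \<Rightarrow> real^'n \<Rightarrow> real^'n \<Rightarrow> real^'n \<Rightarrow> real" where
  "lagrangian \<sigma> X y g b r u = \<sigma> * l1_norm r + 1/2 * (norm b)^2 + u \<bullet> (y - X *v g - b - r)"

definition lagrange_dual :: "real \<Rightarrow> real^'p^'n \<Rightarrow> real^'n \<Rightarrow> real^'n \<Rightarrow> ereal" where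
  "lagrange_dual \<sigma> X y u = (INF gbr \<in> UNIV. ereal (case gbr of (g, b, r) \<Rightarrow> lagrangian \<sigma> X y g b r u))"

end

theory Submission
  imports Defs
begin

definition clipv :: "real \<Rightarrow> real^'n \<Rightarrow> real^'n" where
  "clipv s r = (\<chi> i. if r$i > s then s else if r$i < - s then - s else r$i)"

lemma coord_ineq:
  fixes s r b :: real
  assumes "s > 0"
  defines "c \<equiv> (if r > s then s else if r < - s then - s else r)"
  shows "s*\<bar>r - c\<bar> + c^2/2 + (b - c)^2/2 \<le> s*\<bar>r-b\<bar> + b^2/2"
proof -
  consider "r > s" | "r < - s" | "\<bar>r\<bar> \<le> s" by linarith
  then show ?thesis
  proof cases
    case 1
    then have "c = s" by (simp add: c_def)
    then have "s*\<bar>r - c\<bar> + c^2/2 + (b - c)^2/2 = s*(r-b) + b^2/2"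
      using 1 by (simp add: power2_eq_square field_simps)
    moreover have "s * (r - b) \<le> s*\<bar>r-b\<bar>" by (simp add: assms(1))
    ultimately show ?thesis by linarith
  next
    case 2
    then have "c = - s" using assms by (simp add: c_def)
    then have "s*\<bar>r - c\<bar> + c^2/2 + (b - c)^2/2 = s*(b-r) + b^2/2"
      using 2 by (simp add: power2_eq_square field_simps)
    moreover have "s * (b - r) \<le> s*\<bar>r-b\<bar>" by (simp add: assms(1))
    ultimately show ?thesis by linarith
  next
    case 3
    then have "c = r" by (auto simp: c_def)
    then have "s*\<bar>r - c\<bar> + c^2/2 + (b - c)^2/2 = r*(r-b) + b^2/2"
      by (simp add: power2_eq_square field_simps)
    moreover have "r*(r-b) \<le> \<bar>r\<bar>*\<bar>r-b\<bar>" by (metis abs_ge_self abs_mult)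
    moreover have "\<bar>r\<bar>*\<bar>r-b\<bar> \<le> s*\<bar>r-b\<bar>" using 3 by (simp add: mult_right_mono)
    ultimately show ?thesis by linarith
  qed
qed

lemma norm_sq_sum: "(norm (b::real^'n))^2 = (\<Sum>i\<in>UNIV. (b$i)^2)"
proof -
  have "(norm b)^2 = b \<bullet> b" by (simp add: power2_norm_eq_inner)
  also have "\<dots> = (\<Sum>i\<in>UNIV. (b$i)^2)" by (simp add: inner_vec_def power2_eq_square)
  finally show ?thesis .
qed

lemma psi_sum: "psi s X y g b = (\<Sum>i\<in>UNIV. s*\<bar>(y - X *v g)$i - b$i\<bar> + (b$i)^2/2)"
  by (simp add: psi_def l1_norm_def norm_sq_sum sum_distrib_left sum.distrib sum_divide_distrib)

lemma psi_clip:
  assumes "s > 0"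
  shows "psi s X y g (clipv s (y - X *v g)) + (norm (b - clipv s (y - X *v g)))^2/2 \<le> psi s X y g b"
  unfolding psi_sum norm_sq_sum sum_divide_distrib sum.distrib[symmetric]
proof (rule sum_mono)
  fix i
  show "s * \<bar>(y - X *v g) $ i - clipv s (y - X *v g) $ i\<bar> + (clipv s (y - X *v g) $ i)\<^sup>2 / 2 +
         ((b - clipv s (y - X *v g)) $ i)\<^sup>2 / 2 \<le> s * \<bar>(y - X *v g) $ i - b $ i\<bar> + (b $ i)\<^sup>2 / 2"
    using coord_ineq[OF assms, of "(y - X *v g)$i" "b$i"]
    by (simp only: clipv_def vec_lambda_beta vector_minus_component)
qed

lemma psi_lower:
  assumes "s > 0"
  shows "s * l1_norm (y - X *v g) - real CARD('n) * s^2/2 \<le> psi s X y (g::real^'p) (b::real^'n)"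
proof -
  have "s*\<bar>r\<bar> - s^2/2 \<le> s*\<bar>r-bb\<bar> + bb^2/2" for r bb :: real
  proof -
    have "s*\<bar>r\<bar> \<le> s*\<bar>r-bb\<bar> + s*\<bar>bb\<bar>"
      by (metis abs_triangle_ineq4 add.commute assms distrib_left less_eq_real_def mult_left_mono diff_add_cancel abs_triangle_ineq)
    moreover have "s*\<bar>bb\<bar> \<le> s^2/2 + bb^2/2"
      using sum_squares_ge_zero[of "s - \<bar>bb\<bar>" 0] by (simp add: power2_eq_square field_simps)
    ultimately show ?thesis by linarith
  qed
  then have "(\<Sum>i\<in>UNIV. s*\<bar>(y - X *v g)$i\<bar> - s^2/2) \<le> psi s X y g b"
    unfolding psi_sum by (intro sum_mono) auto
  then show ?thesis by (simp add: sum_subtractf l1_norm_def sum_distrib_left)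
qed


lemma clip_bound: "s > 0 \<Longrightarrow> \<bar>clipv s r $ i\<bar> \<le> s"
  unfolding clipv_def by auto

lemma inner_X: "u \<bullet> (X *v g) = (transpose X *v u) \<bullet> (g::real^'p)" for u :: "real^'n"
  by (simp add: dot_lmul_matrix)

lemma linf_le: "linf_norm (v::real^'n) \<le> c \<longleftrightarrow> (\<forall>i. \<bar>v$i\<bar> \<le> c)"
  unfolding linf_norm_def by (subst Max_le_iff) auto

lemma dual_sum:
  assumes "transpose X *v v = 0"
  shows "dual_obj y v = (\<Sum>i\<in>UNIV. v$i * (y - X *v g)$i - (v$i)^2/2)"
proof -
  have 0: "v \<bullet> (X *v g) = 0" using assms by (simp add: inner_X)
  have "dual_obj y v = v \<bullet> (y - X *v g) - 1/2 * (norm v)^2"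
    unfolding dual_obj_def by (simp add: inner_diff_right 0)
  also have "\<dots> = (\<Sum>i\<in>UNIV. v$i * (y - X *v g)$i - (v$i)^2/2)"
    by (simp add: inner_vec_def norm_sq_sum sum_subtractf sum_divide_distrib)
  finally show ?thesis .
qed

lemma weak_dual:
  assumes "transpose X *v v = 0" "\<forall>i. \<bar>v$i\<bar> \<le> s"
  shows "dual_obj y v \<le> psi s X y g b"
  unfolding dual_sum[OF assms(1), of y g] psi_sum
proof (rule sum_mono)
  fix i
  let ?r = "(y - X *v g)$i"
  have "v$i * (?r - b$i) \<le> \<bar>v$i\<bar> * \<bar>?r - b$i\<bar>" by (metis abs_ge_self abs_mult)
  also have "\<dots> \<le> s * \<bar>?r - b$i\<bar>" using assms(2) by (simp add: mult_right_mono)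
  finally have 1: "v$i * (?r - b$i) \<le> s * \<bar>?r - b$i\<bar>" .
  have 2: "v$i * b$i - (v$i)^2/2 \<le> (b$i)^2/2"
    using sum_squares_ge_zero[of "v$i - b$i" 0] by (simp add: power2_eq_square algebra_simps)
  have "v$i * ?r - (v$i)^2/2 = v$i * (?r - b$i) + (v$i * b$i - (v$i)^2/2)" by (simp add: algebra_simps)
  then show "v$i * ?r - (v$i)^2/2 \<le> s * \<bar>?r - b$i\<bar> + (b$i)^2/2" using 1 2 by linarith
qed

lemma clip_eq:
  assumes "s > 0" "transpose X *v bh = 0" "bh = clipv s (y - X *v gh)"
  shows "psi s X y gh bh = dual_obj y bh"
  unfolding dual_sum[OF assms(2), of y gh] psi_sum
proof (rule sum.cong[OF refl])
  fix i
  let ?r = "(y - X *v gh)$i"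
  have b: "bh$i = (if ?r > s then s else if ?r < - s then - s else ?r)"
    using assms(3) by (simp add: clipv_def)
  consider "?r > s" | "?r < - s" | "\<bar>?r\<bar> \<le> s" by linarith
  then show "s * \<bar>?r - bh$i\<bar> + (bh$i)^2/2 = bh$i * ?r - (bh$i)^2/2"
  proof cases
    case 1 then have "bh$i = s" using b by simp
    then show ?thesis using 1 by (simp add: power2_eq_square field_simps)
  next
    case 2 then have "bh$i = - s" using b assms(1) by simp
    then show ?thesis using 2 by (simp add: power2_eq_square field_simps)
  next
    case 3 then have e: "bh$i = ?r" using b by auto
    have gen: "\<And>r::real. s*\<bar>r-r\<bar> + r^2/2 = r*r - r^2/2" by (simp add: power2_eq_square field_simps)
    show ?thesis by (subst e)+ (rule gen)
  qed
qed

lemma min_kernel: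
  assumes min: "\<forall>g b. psi s X y gh bh \<le> psi s X y g b"
  shows "transpose X *v bh = 0"
proof -
  define w where "w = transpose X *v bh"
  define v where "v = X *v w"
  define a where "a = bh \<bullet> v"
  define N where "N = v \<bullet> v"
  have a: "a = w \<bullet> w" unfolding a_def v_def w_def
    by (simp add: inner_commute dot_lmul_matrix)
  have N: "N \<ge> 0" unfolding N_def by simp
  have key: "0 \<le> - t * a + t^2 * N / 2" for t
  proof -
    have r: "y - X *v (gh + t *\<^sub>R w) - (bh - t *\<^sub>R v) = y - X *v gh - bh"
      by (simp add: v_def matrix_vector_right_distrib matrix_vector_mult_scaleR)
    have n: "(norm (bh - t *\<^sub>R v))^2 = (norm bh)^2 - 2 * t * a + t^2 * N"
      unfolding power2_norm_eq_inner a_def N_def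
      by (simp add: inner_diff_left inner_diff_right inner_commute power2_eq_square algebra_simps)
    have "psi s X y gh bh \<le> psi s X y (gh + t *\<^sub>R w) (bh - t *\<^sub>R v)" using min by blast
    then show ?thesis unfolding psi_def r n by (simp add: algebra_simps)
  qed
  have "a = 0"
  proof (rule ccontr)
    assume "a \<noteq> 0"
    then have ap: "a > 0" using a by simp
    define t where "t = a / (N + 1)"
    have "t^2 * N / 2 \<le> t^2 * (N+1) / 2" by (simp add: divide_right_mono mult_left_mono)
    also have "\<dots> = t * a / 2"
    proof -
      have e: "t*(N+1) = a" unfolding t_def using N by simp
      then show ?thesis by (metis e mult.assoc power2_eq_square)
    qed
    finally have "- t * a + t^2 * N / 2 \<le> - t * a / 2" by linarith
    moreover have "t * a > 0" unfolding t_def using ap N by simp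
    ultimately show False using key[of t] by linarith
  qed
  then show ?thesis using a w_def by simp
qed


lemma clipv_alt: "s > 0 \<Longrightarrow> clipv s r = (\<chi> i. max (- s) (min s (r$i)))"
  unfolding clipv_def by (auto simp: vec_eq_iff)

lemma existence:
  fixes X :: "real^'p^'n"
  assumes rk: "rank X = CARD('p)" and s: "s > 0"
  shows "\<exists>gh bh. \<forall>g b. psi s X y gh bh \<le> psi s X y g b"
proof -
  define H where "H g = psi s X y g (clipv s (y - X *v g))" for g
  have inj: "inj ((*v) X)" using rk full_rank_injective by blast
  obtain B where B: "B > 0" "\<And>x. B * norm x \<le> norm (X *v x)"
    using linear_inj_bounded_below_pos[of "(*v) X"] inj matrix_vector_mul_linear by blast
  define K where "K = real CARD('n) * s^2/2"
  have low: "s * (B * norm g - norm y) - K \<le> H g" for g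
  proof -
    have "B * norm g - norm y \<le> norm (X *v g) - norm y" using B by simp
    also have "\<dots> \<le> norm (X *v g - y)" by (rule norm_triangle_ineq2)
    also have "\<dots> = norm (y - X *v g)" by (rule norm_minus_commute)
    also have "\<dots> \<le> l1_norm (y - X *v g)" unfolding l1_norm_def by (rule norm_le_l1_cart)
    finally have "s * (B * norm g - norm y) \<le> s * l1_norm (y - X *v g)"
      using s by (simp add: mult_left_mono)
    then show ?thesis using psi_lower[OF s, where b="clipv s (y - X *v g)" and y=y and X=X and g=g] unfolding H_def K_def by linarith
  qed
  define R where "R = (H 0 + K + s * norm y) / (s * B)"
  have "H 0 + K + s * norm y \<ge> 0" using low[of 0] by simp
  then have R0: "R \<ge> 0" unfolding R_def using s B by simp
  have cont: "continuous_on UNIV H"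
    unfolding H_def psi_def l1_norm_def clipv_alt[OF s]
    by (intro continuous_intros linear_continuous_on matrix_vector_mul_bounded_linear)
  obtain gm where gm: "gm \<in> cball 0 R" "\<And>g. g \<in> cball 0 R \<Longrightarrow> H gm \<le> H g"
    using continuous_attains_inf[OF compact_cball, of 0 R H] R0 continuous_on_subset[OF cont]
    by auto
  have Hmin: "H gm \<le> H g" for g
  proof (cases "g \<in> cball 0 R")
    case True then show ?thesis using gm by blast
  next
    case False
    then have "norm g > R" by simp
    then have "s * B * norm g > H 0 + K + s * norm y"
      unfolding R_def using s B by (simp add: field_simps)
    then have "H g > H 0" using low[of g] by (simp add: algebra_simps)
    moreover have "H gm \<le> H 0" using gm R0 by simp
    ultimately show ?thesis by simp
  qed
  show ?thesis
  proof (intro exI allI)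
    fix g b
    have "psi s X y gm (clipv s (y - X *v gm)) = H gm" unfolding H_def ..
    also have "\<dots> \<le> H g" by (rule Hmin)
    also have "\<dots> \<le> psi s X y g b" unfolding H_def using psi_clip[OF s, of X y g b]
      zero_le_power2[of "norm (b - clipv s (y - X *v g))"] by linarith
    finally show "psi s X y gm (clipv s (y - X *v gm)) \<le> psi s X y g b" .
  qed
qed

lemma mem_sP:
  assumes s: "s > 0"
  shows "u \<in> (\<lambda>v. s *\<^sub>R v) ` Pstar X \<longleftrightarrow> transpose X *v u = 0 \<and> (\<forall>i. \<bar>u$i\<bar> \<le> s)"
proof
  assume "u \<in> (\<lambda>v. s *\<^sub>R v) ` Pstar X"
  then obtain v where v: "u = s *\<^sub>R v" "transpose X *v v = 0" "\<forall>i. \<bar>v$i\<bar> \<le> 1"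
    unfolding Pstar_def linf_le by auto
  have "\<bar>u$i\<bar> \<le> s" for i using v(1) v(3)[rule_format, of i] s
    by (simp add: abs_mult mult_left_le)
  then show "transpose X *v u = 0 \<and> (\<forall>i. \<bar>u$i\<bar> \<le> s)"
    using v by (simp add: matrix_vector_mult_scaleR)
next
  assume u: "transpose X *v u = 0 \<and> (\<forall>i. \<bar>u$i\<bar> \<le> s)"
  define v where "v = (1/s) *\<^sub>R u"
  have "\<bar>v$i\<bar> \<le> 1" for i using u s unfolding v_def by (simp add: abs_mult field_simps)
  moreover have "transpose X *v v = 0" using u unfolding v_def by (simp add: matrix_vector_mult_scaleR)
  moreover have "u = s *\<^sub>R v" using s unfolding v_def by simp
  ultimately show "u \<in> (\<lambda>v. s *\<^sub>R v) ` Pstar X"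
    unfolding Pstar_def linf_le by auto
qed


lemma INF_minf_real:
  assumes "\<And>M. \<exists>x. f x < M"
  shows "(INF x\<in>UNIV. ereal (f x)) = - \<infinity>"
proof (rule ccontr)
  assume "(INF x\<in>UNIV. ereal (f x)) \<noteq> - \<infinity>"
  then obtain c where c: "c > - \<infinity>" "\<forall>x. c \<le> ereal (f x)" unfolding INF_eq_minf by auto
  show False
  proof (cases c)
    case (real r)
    obtain x where "f x < r" using assms by blast
    then show False using c(2)[rule_format, of x] real by simp
  next
    case PInf then show False using c(2) by simp
  next
    case MInf then show False using c(1) by simp
  qed
qed

lemma lag_dual:
  assumes s: "s > 0"
  shows "lagrange_dual s X y u =
     (if transpose X *v u = 0 \<and> (\<forall>i. \<bar>u$i\<bar> \<le> s) then ereal (dual_obj y u) else - \<infinity>)"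
proof (cases "transpose X *v u = 0 \<and> (\<forall>i. \<bar>u$i\<bar> \<le> s)")
  case True
  have low: "dual_obj y u \<le> lagrangian s X y g b r u" for g b r
  proof -
    have 0: "u \<bullet> (X *v g) = 0" using True by (simp add: inner_X)
    have 1: "u \<bullet> r \<le> s * l1_norm r"
      unfolding inner_vec_def inner_real_def l1_norm_def sum_distrib_left
    proof (rule sum_mono)
      fix i
      have "u$i * r$i \<le> \<bar>u$i\<bar> * \<bar>r$i\<bar>" by (metis abs_ge_self abs_mult)
      also have "\<dots> \<le> s * \<bar>r$i\<bar>" using True by (simp add: mult_right_mono)
      finally show "u$i * r$i \<le> s * \<bar>r$i\<bar>" .
    qed
    have "0 \<le> (b - u) \<bullet> (b - u)" by simp
    then have 2: "u \<bullet> b \<le> 1/2 * (norm b)^2 + 1/2 * (norm u)^2"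
      unfolding power2_norm_eq_inner by (simp add: inner_diff_left inner_diff_right inner_commute)
    show ?thesis unfolding lagrangian_def dual_obj_def
      using 0 1 2 by (simp add: inner_diff_right)
  qed
  have att: "lagrangian s X y 0 u 0 u = dual_obj y u"
    unfolding lagrangian_def dual_obj_def l1_norm_def
    by (simp add: inner_diff_right power2_norm_eq_inner)
  have "lagrange_dual s X y u = ereal (dual_obj y u)"
    unfolding lagrange_dual_def
  proof (rule antisym)
    show "(INF gbr\<in>UNIV. ereal (case gbr of (g, b, r) \<Rightarrow> lagrangian s X y g b r u)) \<le> ereal (dual_obj y u)"
      using INF_lower[of "(0, u, 0)" UNIV "\<lambda>gbr. ereal (case gbr of (g, b, r) \<Rightarrow> lagrangian s X y g b r u)"]
      att by simp
    show "ereal (dual_obj y u) \<le> (INF gbr\<in>UNIV. ereal (case gbr of (g, b, r) \<Rightarrow> lagrangian s X y g b r u))"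
      by (rule INF_greatest) (auto simp: low)
  qed
  then show ?thesis using True by simp
next
  case False
  have "\<exists>gbr. (case gbr of (g, b, r) \<Rightarrow> lagrangian s X y g b r u) < M" for M
  proof (cases "transpose X *v u = 0")
    case False
    define w where "w = transpose X *v u"
    have wp: "w \<bullet> w > 0" using False unfolding w_def by simp
    define t where "t = (\<bar>u \<bullet> y\<bar> + \<bar>M\<bar> + 1) / (w \<bullet> w)"
    have e: "u \<bullet> (X *v (t *\<^sub>R w)) = t * (w \<bullet> w)"
      by (simp add: matrix_vector_mult_scaleR inner_X w_def)
    have tw: "t * (w \<bullet> w) = \<bar>u \<bullet> y\<bar> + \<bar>M\<bar> + 1" unfolding t_def using wp by simp
    have "lagrangian s X y (t *\<^sub>R w) 0 0 u = u \<bullet> y - t * (w \<bullet> w)"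
      unfolding lagrangian_def l1_norm_def by (simp add: inner_diff_right e)
    also have "\<dots> < M" using tw by linarith
    finally show ?thesis by (intro exI[of _ "(t *\<^sub>R w, 0, 0)"]) simp
  next
    case True
    with False obtain i where ui: "\<bar>u$i\<bar> > s" by (auto simp: not_le)
    define e where "e = (\<chi> j. if j = i then u$i else (0::real))"
    define d where "d = \<bar>u$i\<bar> * (\<bar>u$i\<bar> - s)"
    have dp: "d > 0" unfolding d_def using ui s by simp
    define t where "t = (\<bar>u \<bullet> y\<bar> + \<bar>M\<bar> + 1) / d"
    have tp: "t > 0" unfolding t_def using dp by simp
    have l1: "l1_norm (t *\<^sub>R e) = t * \<bar>u$i\<bar>"
      unfolding l1_norm_def e_def using tp by (simp add: abs_mult if_distrib sum.delta cong: if_cong)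
    have ue: "u \<bullet> e = u$i * u$i"
      unfolding inner_vec_def inner_real_def e_def by (simp add: if_distrib sum.delta cong: if_cong)
    have ie: "u \<bullet> (t *\<^sub>R e) = t * (\<bar>u$i\<bar> * \<bar>u$i\<bar>)"
      by (metis inner_scaleR_right abs_mult_self_eq ue)
    have 0: "u \<bullet> (X *v 0) = 0" by simp
    have "lagrangian s X y 0 0 (t *\<^sub>R e) u = s * (t * \<bar>u$i\<bar>) + (u \<bullet> y - u \<bullet> (t *\<^sub>R e))"
      unfolding lagrangian_def l1 by (simp add: inner_diff_right)
    also have "\<dots> = u \<bullet> y - t * d" unfolding ie d_def by (simp add: algebra_simps)
    also have "\<dots> < M" using dp unfolding t_def by simp
    finally show ?thesis by (intro exI[of _ "(0, 0, t *\<^sub>R e)"]) simp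
  qed
  then have "lagrange_dual s X y u = - \<infinity>"
    unfolding lagrange_dual_def by (intro INF_minf_real) auto
  then show ?thesis using False by simp
qed

theorem lemma4p3:
  fixes X :: "real^'p^'n" and y :: "real^'n" and \<sigma> :: real
  assumes "CARD('p) < CARD('n)"
    and "rank X = CARD('p)"
    and "\<sigma> > 0"
  shows "(\<forall>gh bh. (\<forall>g b. psi \<sigma> X y gh bh \<le> psi \<sigma> X y g b) \<longleftrightarrow>
            (transpose X *v bh = 0 \<and>
             (\<forall>i. bh $ i = (if y $ i - (X *v gh) $ i > \<sigma> then \<sigma>
                            else if y $ i - (X *v gh) $ i < - \<sigma> then - \<sigma>
                            else y $ i - (X *v gh) $ i))))
    \<and> (\<forall>gh bh. (\<forall>g b. psi \<sigma> X y gh bh \<le> psi \<sigma> X y g b) \<longrightarrow> linf_norm bh \<le> \<sigma>)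
    \<and> (\<forall>u. lagrange_dual \<sigma> X y u =
            (if u \<in> (\<lambda>v. \<sigma> *\<^sub>R v) ` Pstar X then ereal (dual_obj y u) else - \<infinity>))
    \<and> (\<exists>gh bh u. (\<forall>g b. psi \<sigma> X y gh bh \<le> psi \<sigma> X y g b)
            \<and> u \<in> (\<lambda>v. \<sigma> *\<^sub>R v) ` Pstar X
            \<and> (\<forall>v \<in> (\<lambda>v. \<sigma> *\<^sub>R v) ` Pstar X. dual_obj y v \<le> dual_obj y u)
            \<and> psi \<sigma> X y gh bh = dual_obj y u)"
proof -
  have s: "\<sigma> > 0" by (rule assms(3))
  have clipc: "(\<forall>i. bh $ i = (if y $ i - (X *v gh) $ i > \<sigma> then \<sigma>
                            else if y $ i - (X *v gh) $ i < - \<sigma> then - \<sigma>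
                            else y $ i - (X *v gh) $ i)) \<longleftrightarrow> bh = clipv \<sigma> (y - X *v gh)" for gh bh
    by (simp add: vec_eq_iff clipv_def)
  have P1: "(\<forall>g b. psi \<sigma> X y gh bh \<le> psi \<sigma> X y g b) \<longleftrightarrow>
        (transpose X *v bh = 0 \<and> bh = clipv \<sigma> (y - X *v gh))" for gh bh
  proof
    assume min: "\<forall>g b. psi \<sigma> X y gh bh \<le> psi \<sigma> X y g b"
    have "psi \<sigma> X y gh bh \<le> psi \<sigma> X y gh (clipv \<sigma> (y - X *v gh))" using min by blast
    then have "(norm (bh - clipv \<sigma> (y - X *v gh)))^2 \<le> 0"
      using psi_clip[OF s, of X y gh bh] by linarith
    then have "bh = clipv \<sigma> (y - X *v gh)" by simp
    then show "transpose X *v bh = 0 \<and> bh = clipv \<sigma> (y - X *v gh)"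
      using min_kernel[OF min] by simp
  next
    assume c: "transpose X *v bh = 0 \<and> bh = clipv \<sigma> (y - X *v gh)"
    show "\<forall>g b. psi \<sigma> X y gh bh \<le> psi \<sigma> X y g b"
    proof (intro allI)
      fix g b
      have "\<forall>i. \<bar>bh$i\<bar> \<le> \<sigma>" using c clip_bound[OF s] by auto
      then have "dual_obj y bh \<le> psi \<sigma> X y g b" using weak_dual c by blast
      moreover have "psi \<sigma> X y gh bh = dual_obj y bh" using clip_eq[OF s] c by blast
      ultimately show "psi \<sigma> X y gh bh \<le> psi \<sigma> X y g b" by linarith
    qed
  qed
  have A: "(\<forall>gh bh. (\<forall>g b. psi \<sigma> X y gh bh \<le> psi \<sigma> X y g b) \<longleftrightarrow>
            (transpose X *v bh = 0 \<and>
             (\<forall>i. bh $ i = (if y $ i - (X *v gh) $ i > \<sigma> then \<sigma>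
                            else if y $ i - (X *v gh) $ i < - \<sigma> then - \<sigma>
                            else y $ i - (X *v gh) $ i))))"
    using P1 clipc by simp
  have B: "\<forall>gh bh. (\<forall>g b. psi \<sigma> X y gh bh \<le> psi \<sigma> X y g b) \<longrightarrow> linf_norm bh \<le> \<sigma>"
    using P1 clip_bound[OF s] by (auto simp: linf_le)
  have C: "\<forall>u. lagrange_dual \<sigma> X y u =
            (if u \<in> (\<lambda>v. \<sigma> *\<^sub>R v) ` Pstar X then ereal (dual_obj y u) else - \<infinity>)"
  proof (intro allI)
    fix u
    show "lagrange_dual \<sigma> X y u =
            (if u \<in> (\<lambda>v. \<sigma> *\<^sub>R v) ` Pstar X then ereal (dual_obj y u) else - \<infinity>)"
      using lag_dual[OF s, of X y u] mem_sP[OF s, of u X] by (metis (no_types, lifting))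
  qed
  obtain gh bh where min: "\<forall>g b. psi \<sigma> X y gh bh \<le> psi \<sigma> X y g b"
    using existence[OF assms(2) s] by blast
  then have c: "transpose X *v bh = 0" "bh = clipv \<sigma> (y - X *v gh)" using P1 by auto
  have mem: "bh \<in> (\<lambda>v. \<sigma> *\<^sub>R v) ` Pstar X"
    by (rule mem_sP[OF s, THEN iffD2]) (use c clip_bound[OF s] in auto)
  have eq: "psi \<sigma> X y gh bh = dual_obj y bh" using clip_eq[OF s c] .
  have mx: "\<forall>v \<in> (\<lambda>v. \<sigma> *\<^sub>R v) ` Pstar X. dual_obj y v \<le> dual_obj y bh"
  proof
    fix v assume "v \<in> (\<lambda>v. \<sigma> *\<^sub>R v) ` Pstar X"
    then have "transpose X *v v = 0" "\<forall>i. \<bar>v$i\<bar> \<le> \<sigma>" using mem_sP[OF s] by auto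
    then have "dual_obj y v \<le> psi \<sigma> X y gh bh" by (rule weak_dual)
    then show "dual_obj y v \<le> dual_obj y bh" using eq by simp
  qed
  show ?thesis using A B C min mem mx eq by blast
qed

end
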